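(* In the Game of Cycles played on the $K_4$ board (the complete graph on four vertices embedded in the plane, together with its three bounded cells), Player~2 has a winning strategy.
   Context: The Game of Cycles. A board is a simple connected planar graph embedded in the plane, together with its bounded cells (the bounded faces of the embedding). Two players alternate turns; on a turn a player marks one unmarked edge with an arrow pointing along the edge in one of its two directions. Each edge receives at most one arrow, and arrows have the same effect regardless of who placed them. Moves must obey the sink-source rule: no move may create a sink (a vertex all of whose incident edges are marked with arrows pointing toward it) or a source (a vertex all of whose incident edges are marked with arrows pointing away from it). A player who has a legal move must make one. A cycle cell is a bounded cell all of whose boundary edges are marked with arrows all cycling in the same direction (all clockwise or all counterclockwise) around that cell. The first player to create a cycle cell wins; if play ends (no legal move remains) without a cycle cell having been created, the player who made the last move wins. A winning strategy for a player is a rule for choosing moves that guarantees that player wins regardless of the opponent's moves. *)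

theory Defs
  imports Main
begin

text \<open>A board: vertex set V, edge set E (edges are 2-element vertex sets),
and bounded cells, each given by its boundary cycle as a list of vertices in
cyclic order. An arrow (a marked edge) is a pair (u,v) meaning u points to v.\<close>

type_synonym vertex = nat
type_synonym arrow = "vertex \<times> vertex"

record board =
  verts :: "vertex set"
  edges :: "vertex set set"
  cells :: "vertex list list"

definition marked :: "arrow set \<Rightarrow> vertex set \<Rightarrow> bool" where
  "marked M e \<longleftrightarrow> (\<exists>(u,v)\<in>M. e = {u,v})"

definition is_sink :: "board \<Rightarrow> arrow set \<Rightarrow> vertex \<Rightarrow> bool" where
  "is_sink B M v \<longleftrightarrow> (\<forall>e\<in>edges B. v \<in> e \<longrightarrow> (\<exists>u. e = {u,v} \<and> (u,v) \<in> M))"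

definition is_source :: "board \<Rightarrow> arrow set \<Rightarrow> vertex \<Rightarrow> bool" where
  "is_source B M v \<longleftrightarrow> (\<forall>e\<in>edges B. v \<in> e \<longrightarrow> (\<exists>u. e = {v,u} \<and> (v,u) \<in> M))"

definition legal_move :: "board \<Rightarrow> arrow set \<Rightarrow> arrow \<Rightarrow> bool" where
  "legal_move B M a \<longleftrightarrow>
     (case a of (u,v) \<Rightarrow>
        {u,v} \<in> edges B \<and> u \<noteq> v \<and> \<not> marked M {u,v} \<and>
        (\<forall>w\<in>verts B. \<not> is_sink B (insert a M) w \<and> \<not> is_source B (insert a M) w))"

definition cell_arrows :: "vertex list \<Rightarrow> arrow list" where
  "cell_arrows c = zip c (rotate1 c)"

definition cycle_cell :: "arrow set \<Rightarrow> vertex list \<Rightarrow> bool" where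
  "cycle_cell M c \<longleftrightarrow>
     (\<forall>a\<in>set (cell_arrows c). a \<in> M) \<or> (\<forall>(u,v)\<in>set (cell_arrows c). (v,u) \<in> M)"

definition has_cycle_cell :: "board \<Rightarrow> arrow set \<Rightarrow> bool" where
  "has_cycle_cell B M \<longleftrightarrow> (\<exists>c\<in>set (cells B). cycle_cell M c)"

text \<open>A play is the list of moves made so far; move number i (0-based) is made
by player 1 if i is even and by player 2 if i is odd. Play stops as soon as a
cycle cell is created.\<close>
definition player_of :: "nat \<Rightarrow> nat" where
  "player_of i = (if even i then 1 else 2)"

definition legal_play :: "board \<Rightarrow> arrow list \<Rightarrow> bool" where
  "legal_play B ms \<longleftrightarrow>
     (\<forall>i<length ms. \<not> has_cycle_cell B (set (take i ms)) \<and>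
                    legal_move B (set (take i ms)) (ms ! i))"

definition play_over :: "board \<Rightarrow> arrow list \<Rightarrow> bool" where
  "play_over B ms \<longleftrightarrow> has_cycle_cell B (set ms) \<or> \<not> (\<exists>a. legal_move B (set ms) a)"

definition winner :: "board \<Rightarrow> arrow list \<Rightarrow> nat" where
  "winner B ms =
     (if has_cycle_cell B (set ms)
      then player_of (LEAST i. has_cycle_cell B (set (take (Suc i) ms)))
      else player_of (length ms - 1))"

definition consistent_with :: "nat \<Rightarrow> (arrow list \<Rightarrow> arrow) \<Rightarrow> arrow list \<Rightarrow> bool" where
  "consistent_with p \<sigma> ms \<longleftrightarrow> (\<forall>i<length ms. player_of i = p \<longrightarrow> ms ! i = \<sigma> (take i ms))"

definition winning_strategy :: "board \<Rightarrow> nat \<Rightarrow> (arrow list \<Rightarrow> arrow) \<Rightarrow> bool" where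
  "winning_strategy B p \<sigma> \<longleftrightarrow>
     (\<forall>ms. legal_play B ms \<and> consistent_with p \<sigma> ms \<and> \<not> play_over B ms
            \<and> player_of (length ms) = p \<longrightarrow> legal_move B (set ms) (\<sigma> ms)) \<and>
     (\<forall>ms. legal_play B ms \<and> consistent_with p \<sigma> ms \<and> play_over B ms
            \<longrightarrow> ms \<noteq> [] \<and> winner B ms = p)"

text \<open>The K4 board: outer triangle 0,1,2 with vertex 3 inside, joined to all;
the three bounded cells are the triangles 0-1-3, 1-2-3, 2-0-3.\<close>
definition K4_board :: board where
  "K4_board = \<lparr> verts = {0,1,2,3},
                edges = {{0,1},{1,2},{2,0},{0,3},{1,3},{2,3}},
                cells = [[0,1,3],[1,2,3],[2,0,3]] \<rparr>"

end

theory Submission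
  imports Defs
begin

datatype strat = Node "(arrow \<times> arrow \<times> strat) list"

fun lk :: "strat \<Rightarrow> arrow \<Rightarrow> (arrow \<times> strat) option" where
  "lk (Node l) a = map_option snd (find (\<lambda>x. fst x = a) l)"

fun pt :: "strat \<Rightarrow> arrow list \<Rightarrow> arrow" where
  "pt t [] = (0,0)"
| "pt t [a] = (case lk t a of Some (b,_) \<Rightarrow> b | None \<Rightarrow> (0,0))"
| "pt t (a # b # rest) = (case lk t a of Some (_,t') \<Rightarrow> pt t' rest | None \<Rightarrow> (0,0))"

definition trie :: strat where
  "trie = Node [((0,1),(2,3),Node [((1,2),(3,1),Node []), ((2,1),(0,3),Node []), ((2,0),(0,3),Node [((1,2),(3,1),Node []), ((3,1),(1,2),Node [])]), ((0,2),(3,0),Node []), ((0,3),(2,1),Node []), ((3,0),(0,2),Node []), ((1,3),(3,0),Node []), ((3,1),(1,2),Node [])]), ((1,0),(2,3),Node [((1,2),(3,1),Node []), ((2,1),(1,3),Node [((0,2),(3,0),Node []), ((3,0),(0,2),Node [])]), ((2,0),(1,3),Node []), ((0,2),(3,0),Node []), ((0,3),(3,1),Node []), ((3,0),(0,2),Node []), ((1,3),(2,1),Node [((0,2),(3,0),Node []), ((3,0),(0,2),Node [])]), ((3,1),(1,2),Node [])]), ((1,2),(0,3),Node [((0,1),(1,3),Node [((2,0),(3,2),Node []), ((3,2),(2,0),Node [])]), ((1,0),(3,1),Node []), ((2,0),(3,2),Node []), ((0,2),(1,3),Node []), ((1,3),(0,1),Node [((2,0),(3,2),Node []), ((3,2),(2,0),Node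 [])]), ((3,1),(1,0),Node []), ((2,3),(3,1),Node []), ((3,2),(2,0),Node [])]), ((2,1),(0,3),Node [((0,1),(2,3),Node []), ((1,0),(3,1),Node []), ((2,0),(3,2),Node []), ((0,2),(2,3),Node [((1,0),(3,1),Node []), ((3,1),(1,0),Node [])]), ((1,3),(3,2),Node []), ((3,1),(1,0),Node []), ((2,3),(0,1),Node []), ((3,2),(2,0),Node [])]), ((2,0),(1,3),Node [((0,1),(3,0),Node []), ((1,0),(2,3),Node []), ((1,2),(2,3),Node [((0,1),(3,0),Node []), ((3,0),(0,1),Node [])]), ((2,1),(3,2),Node []), ((0,3),(3,2),Node []), ((3,0),(0,1),Node []), ((2,3),(1,0),Node []), ((3,2),(2,1),Node [])]), ((0,2),(1,3),Node [((0,1),(3,0),Node []), ((1,0),(0,3),Node [((2,1),(3,2),Node []), ((3,2),(2,1),Node [])]), ((1,2),(0,3),Node []), ((2,1),(3,2),Node []), ((0,3),(1,0),Node [((2,1),(3,2),Node []), ((3,2),(2,1),Node [])]), ((3,0),(0,1),Node []), ((2,3),(3,0),Node []), ((3,2),(2,1),Node [])]), ((0,3),(1,2),Node [((0,1),(1,3),Node [((2,0),(3,2),Node []), ((3,2),(2,0),Node [])]), ((1,0),(3,1),Node []), ((2,0),(3,2),Node []), ((0,2),(1,3),Node []), ((1,3),(0,1),Node [((2,0),(3,2),Node []), ((3,2),(2,0),Node [])]), ((3,1),(1,0),Node []), ((2,3),(3,1),Node []), ((3,2),(2,0),Node [])]), ((3,0),(1,2),Node [((0,1),(1,3),Node []),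 ((1,0),(3,2),Node []), ((2,0),(3,2),Node [((0,1),(1,3),Node []), ((1,3),(0,1),Node [])]), ((0,2),(2,3),Node []), ((1,3),(0,1),Node []), ((3,1),(2,3),Node []), ((2,3),(0,2),Node []), ((3,2),(1,0),Node [])]), ((1,3),(2,0),Node [((0,1),(3,0),Node []), ((1,0),(2,3),Node []), ((1,2),(2,3),Node [((0,1),(3,0),Node []), ((3,0),(0,1),Node [])]), ((2,1),(3,2),Node []), ((0,3),(3,2),Node []), ((3,0),(0,1),Node []), ((2,3),(1,0),Node []), ((3,2),(2,1),Node [])]), ((3,1),(2,0),Node [((0,1),(3,0),Node [((1,2),(2,3),Node []), ((2,3),(1,2),Node [])]), ((1,0),(0,3),Node []), ((1,2),(2,3),Node []), ((2,1),(3,0),Node []), ((0,3),(1,0),Node []), ((3,0),(0,1),Node [((1,2),(2,3),Node []), ((2,3),(1,2),Node [])]), ((2,3),(1,2),Node []), ((3,2),(0,3),Node [])]), ((2,3),(0,1),Node [((1,2),(3,1),Node []), ((2,1),(0,3),Node []), ((2,0),(0,3),Node [((1,2),(3,1),Node []), ((3,1),(1,2),Node [])]), ((0,2),(3,0),Node []), ((0,3),(2,1),Node []), ((3,0),(0,2),Node []), ((1,3),(3,0),Node []), ((3,1),(1,2),Node [])]), ((3,2),(0,1),Node [((1,2),(3,1),Node [((2,0),(0,3),Node []), ((0,3),(2,0),Node [])]), ((2,1),(1,3),Node []), ((2,0),(0,3),Node []), ((0,2),(3,1),Node []), ((0,3),(2,0),Node []), ((3,0),(1,3),Node []), ((1,3),(2,1),Node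 []), ((3,1),(1,2),Node [((2,0),(0,3),Node []), ((0,3),(2,0),Node [])])])]"

definition sig :: "arrow list \<Rightarrow> arrow" where
  "sig ms = pt trie ms"

definition A12 :: "arrow list" where
  "A12 = [(0,1),(1,0),(1,2),(2,1),(2,0),(0,2),(0,3),(3,0),(1,3),(3,1),(2,3),(3,2)]"

definition nb :: "nat \<Rightarrow> nat list" where
  "nb w = filter (\<lambda>x. x \<noteq> w) [0,1,2,3]"

definition legalK :: "arrow set \<Rightarrow> arrow \<Rightarrow> bool" where
  "legalK M a = (a \<in> set A12 \<and> a \<notin> M \<and> prod.swap a \<notin> M \<and>
     (\<forall>w\<in>set [0,1,2,3]. \<not> (\<forall>x\<in>set (nb w). (x,w) \<in> insert a M) \<and>
                          \<not> (\<forall>x\<in>set (nb w). (w,x) \<in> insert a M)))"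

definition overK :: "arrow set \<Rightarrow> bool" where
  "overK M = (has_cycle_cell K4_board M \<or> \<not> (\<exists>a\<in>set A12. legalK M a))"

fun chk :: "nat \<Rightarrow> arrow list \<Rightarrow> bool" where
  "chk 0 ms = False"
| "chk (Suc n) ms = (if overK (set ms) then (even (length ms) \<and> ms \<noteq> [])
     else if odd (length ms) then legalK (set ms) (sig ms) \<and> chk n (ms @ [sig ms])
     else (\<forall>a\<in>set A12. legalK (set ms) a \<longrightarrow> chk n (ms @ [a])))"

lemma chk7: "chk 7 []"
  by code_simp

lemma sink_iff: "w \<in> {0,1,2,3} \<Longrightarrow> is_sink K4_board M w \<longleftrightarrow> (\<forall>x\<in>set (nb w). (x,w)\<in>M)"
  unfolding is_sink_def K4_board_def nb_def
  by (elim insertE emptyE; simp add: doubleton_eq_iff; blast)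

lemma source_iff: "w \<in> {0,1,2,3} \<Longrightarrow> is_source K4_board M w \<longleftrightarrow> (\<forall>x\<in>set (nb w). (w,x)\<in>M)"
  unfolding is_source_def K4_board_def nb_def
  by (elim insertE emptyE; simp add: doubleton_eq_iff; blast)

lemma marked_iff: "marked M {u,v} \<longleftrightarrow> (u,v) \<in> M \<or> (v,u) \<in> M"
  by (auto simp: marked_def doubleton_eq_iff)

lemma edge_iff: "({u,v} \<in> edges K4_board \<and> u \<noteq> v) \<longleftrightarrow> (u,v) \<in> set A12"
  by (auto simp: K4_board_def A12_def doubleton_eq_iff)

lemma legal_iff: "legal_move K4_board M a \<longleftrightarrow> legalK M a"
proof -
  obtain u v where a: "a = (u,v)" by force
  have V: "verts K4_board = {0,1,2,3}" by (simp add: K4_board_def)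
  have S: "(\<forall>w\<in>{0,1,2,3}. \<not> is_sink K4_board (insert (u,v) M) w \<and> \<not> is_source K4_board (insert (u,v) M) w)
     \<longleftrightarrow> (\<forall>w\<in>set [0,1,2,3]. \<not> (\<forall>x\<in>set (nb w). (x,w) \<in> insert (u,v) M) \<and>
                          \<not> (\<forall>x\<in>set (nb w). (w,x) \<in> insert (u,v) M))"
    using sink_iff[of _ "insert (u,v) M"] source_iff[of _ "insert (u,v) M"]
    by (metis set_simps(1) set_simps(2))
  show ?thesis unfolding a legal_move_def legalK_def prod.case V
    using edge_iff[of u v] marked_iff[of M u v] S
    by (simp only: prod.swap_def fst_conv snd_conv) blast
qed
lemma over_iff: "play_over K4_board ms \<longleftrightarrow> overK (set ms)"
  unfolding play_over_def overK_def legal_iff legalK_def by blast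

lemma player2: "player_of i = 2 \<longleftrightarrow> odd i"
  by (simp add: player_of_def)

lemma winner_eq:
  assumes lp: "legal_play B ms" and ne: "ms \<noteq> []"
  shows "winner B ms = player_of (length ms - 1)"
proof (cases "has_cycle_cell B (set ms)")
  case True
  have "(LEAST i. has_cycle_cell B (set (take (Suc i) ms))) = length ms - 1"
  proof (rule Least_equality)
    show "has_cycle_cell B (set (take (Suc (length ms - 1)) ms))"
      using True ne by simp
  next
    fix y assume y: "has_cycle_cell B (set (take (Suc y) ms))"
    show "length ms - 1 \<le> y"
    proof (rule ccontr)
      assume "\<not> length ms - 1 \<le> y"
      hence "Suc y < length ms" by simp
      with lp y show False unfolding legal_play_def by blast
    qed
  qed
  thus ?thesis using True by (simp add: winner_def)
qed (simp add: winner_def)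

definition Q :: "arrow list \<Rightarrow> bool" where
  "Q ms = ((legal_play K4_board ms \<and> consistent_with 2 sig ms \<and> \<not> play_over K4_board ms
            \<and> player_of (length ms) = 2 \<longrightarrow> legal_move K4_board (set ms) (sig ms)) \<and>
     (legal_play K4_board ms \<and> consistent_with 2 sig ms \<and> play_over K4_board ms
            \<longrightarrow> ms \<noteq> [] \<and> winner K4_board ms = 2))"

lemma main: "chk n ms0 \<Longrightarrow> legal_play K4_board (ms0 @ ext) \<Longrightarrow>
   consistent_with 2 sig (ms0 @ ext) \<Longrightarrow> Q (ms0 @ ext)"
proof (induction ext arbitrary: ms0 n)
  case Nil
  then obtain m where n: "n = Suc m" by (cases n) auto
  have lp: "legal_play K4_board ms0" using Nil by simp
  show ?case
  proof (cases "overK (set ms0)")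
    case True
    then have "even (length ms0) \<and> ms0 \<noteq> []" using Nil(1) n by simp
    then show ?thesis using winner_eq[OF lp] True unfolding Q_def over_iff
      by (simp add: player_of_def)
  next
    case False
    then show ?thesis using Nil(1) n unfolding Q_def over_iff player2
      by (simp add: legal_iff)
  qed
next
  case (Cons a ext)
  then obtain m where n: "n = Suc m" by (cases n) auto
  have e: "ms0 @ a # ext = (ms0 @ [a]) @ ext" by simp
  have idx: "length ms0 < length (ms0 @ a # ext)" by simp
  have tk: "take (length ms0) (ms0 @ a # ext) = ms0" by simp
  have nth: "(ms0 @ a # ext) ! length ms0 = a" by simp
  have l1: "\<not> has_cycle_cell K4_board (set ms0) \<and> legal_move K4_board (set ms0) a"
    using Cons(3) idx unfolding legal_play_def by (metis tk nth)
  have c1: "player_of (length ms0) = 2 \<longrightarrow> a = sig ms0"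
    using Cons(4) idx unfolding consistent_with_def by (metis tk nth)
  have nov: "\<not> overK (set ms0)"
    using l1 unfolding overK_def legal_iff legalK_def by blast
  have "chk m (ms0 @ [a])"
  proof (cases "odd (length ms0)")
    case True
    then show ?thesis using Cons(2) n nov c1 player2 by simp
  next
    case False
    then show ?thesis using Cons(2) n nov l1 legal_iff[of "set ms0" a] legalK_def
      by auto
  qed
  then show ?case using Cons.IH Cons(3,4) e by metis
qed

theorem theorem4p1:
  shows "\<exists>\<sigma>. winning_strategy K4_board 2 \<sigma>"
proof -
  have "\<forall>ms. Q ms" using main[OF chk7, of _ ] by (metis append_Nil Q_def)
  then have "winning_strategy K4_board 2 sig" unfolding winning_strategy_def Q_def by blast
  then show ?thesis by blast
qed

end
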